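(* Let $g$ be a function such that for every real $c\geq 1$, every finite graph $G$ with growth $f_G(r)\leq cr$ for all positive integers $r$ has $\operatorname{tw}(G)\leq g(c)$. Then $g(c)\in\Omega(c\log c)$ (as $c\to\infty$).
   Context: $\log$ is the natural logarithm. The growth of a finite graph $G$ is the function $f_G\colon\mathbb{N}\to\mathbb{N}$ where $f_G(r)$ is the maximum of $|V(H)|$ over all subgraphs $H$ of $G$ of radius at most $r$. $\operatorname{tw}(G)$ denotes the treewidth of $G$: the minimum, over tree-decompositions $(B_x: x\in V(T))$ of $G$ (bags indexed by a tree $T$, each edge in some bag, each vertex's bags forming a non-empty subtree), of the maximum bag size minus $1$. *)

theory Defs
  imports Complex_Main "HOL-Library.Landau_Symbols"
begin

text \<open>Finite simple graphs are represented by a vertex set V (of naturals; every finite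
graph is isomorphic to one of this form) and an edge set E of 2-element subsets of V.\<close>

definition graph :: "nat set \<Rightarrow> nat set set \<Rightarrow> bool" where
  "graph V E \<longleftrightarrow> finite V \<and> (\<forall>e\<in>E. \<exists>u v. e = {u, v} \<and> u \<in> V \<and> v \<in> V \<and> u \<noteq> v)"

definition walk :: "nat set set \<Rightarrow> nat list \<Rightarrow> bool" where
  "walk E xs \<longleftrightarrow> xs \<noteq> [] \<and> (\<forall>i. Suc i < length xs \<longrightarrow> {xs ! i, xs ! Suc i} \<in> E)"

definition dist_le :: "nat set \<Rightarrow> nat set set \<Rightarrow> nat \<Rightarrow> nat \<Rightarrow> nat \<Rightarrow> bool" where
  "dist_le V E u v k \<longleftrightarrow> (\<exists>xs. walk E xs \<and> set xs \<subseteq> V \<and> hd xs = u \<and> last xs = v \<and> length xs \<le> Suc k)"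

definition subgraph :: "nat set \<Rightarrow> nat set set \<Rightarrow> nat set \<Rightarrow> nat set set \<Rightarrow> bool" where
  "subgraph W F V E \<longleftrightarrow> W \<subseteq> V \<and> F \<subseteq> E \<and> (\<forall>e\<in>F. e \<subseteq> W)"

definition radius_le :: "nat set \<Rightarrow> nat set set \<Rightarrow> nat \<Rightarrow> bool" where
  "radius_le W F r \<longleftrightarrow> (\<exists>v\<in>W. \<forall>u\<in>W. dist_le W F v u r)"

definition growth :: "nat set \<Rightarrow> nat set set \<Rightarrow> nat \<Rightarrow> nat" where
  "growth V E r = Max (insert 0 {card W | W F. subgraph W F V E \<and> radius_le W F r})"

definition connected_on :: "nat set set \<Rightarrow> nat set \<Rightarrow> bool" where
  "connected_on E S \<longleftrightarrow> (\<forall>x\<in>S. \<forall>y\<in>S. \<exists>xs. walk E xs \<and> set xs \<subseteq> S \<and> hd xs = x \<and> last xs = y)"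

definition tree :: "nat set \<Rightarrow> nat set set \<Rightarrow> bool" where
  "tree VT ET \<longleftrightarrow> graph VT ET \<and> VT \<noteq> {} \<and> connected_on ET VT \<and> card ET = card VT - 1"

definition tree_decomposition ::
  "nat set \<Rightarrow> nat set set \<Rightarrow> nat set \<Rightarrow> nat set set \<Rightarrow> (nat \<Rightarrow> nat set) \<Rightarrow> bool" where
  "tree_decomposition V E VT ET B \<longleftrightarrow> tree VT ET
     \<and> (\<forall>x\<in>VT. B x \<subseteq> V)
     \<and> (\<forall>e\<in>E. \<exists>x\<in>VT. e \<subseteq> B x)
     \<and> (\<forall>v\<in>V. {x \<in> VT. v \<in> B x} \<noteq> {} \<and> connected_on ET {x \<in> VT. v \<in> B x})"

definition decomp_width :: "nat set \<Rightarrow> (nat \<Rightarrow> nat set) \<Rightarrow> int" where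
  "decomp_width VT B = int (Max ((\<lambda>x. card (B x)) ` VT)) - 1"

definition treewidth :: "nat set \<Rightarrow> nat set set \<Rightarrow> int" where
  "treewidth V E = Min {decomp_width VT B | VT ET B. tree_decomposition V E VT ET B}"

end

theory Submission
  imports Defs "HOL-Combinatorics.Permutations" "HOL-Library.FuncSet" "HOL-Real_Asymp.Real_Asymp"
begin

definition ff :: "nat \<Rightarrow> nat \<Rightarrow> nat" where
  "ff g a = (\<Prod>j<a. (g - j))"

lemma ff_Suc: "ff g (Suc a) = g * ff (g - 1) a"
  unfolding ff_def by (simp add: prod.lessThan_Suc_shift del: prod.lessThan_Suc)

lemma ff_Suc2: "ff g (Suc a) = ff g a * (g - a)"
  unfolding ff_def by simp

lemma ff_fact: "a \<le> n \<Longrightarrow> ff n a * fact (n - a) = (fact n :: nat)"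
proof (induction a)
  case 0 then show ?case by (simp add: ff_def)
next
  case (Suc a)
  have e: "n - a = Suc (n - Suc a)" using Suc.prems by linarith
  have "fact (n - a) = (n - a) * (fact (n - Suc a) :: nat)"
    unfolding e fact_Suc by simp
  then have "ff n (Suc a) * fact (n - Suc a) = ff n a * fact (n - a)"
    unfolding ff_Suc2 by (simp only: mult.assoc)
  then show ?case using Suc by simp
qed
lemma count_perms:
  assumes "finite A"
  shows "finite S \<Longrightarrow> A \<subseteq> S \<Longrightarrow> C \<subseteq> S \<Longrightarrow>
    card {p. p permutes S \<and> p ` A \<subseteq> C} \<le> ff (card C) (card A) * fact (card S - card A)"
  using assms
proof (induction A arbitrary: S C rule: finite_induct)
  case empty
  then show ?case by (simp add: ff_def card_permutations)
next
  case (insert a A S C)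
  define X where "X c = {p. p permutes S \<and> p a = c \<and> p ` A \<subseteq> C - {c}}" for c
  define Y where "Y c = {q. q permutes (S - {a}) \<and> q ` A \<subseteq> transpose a c ` (C - {c})}" for c
  have fin: "finite {p. p permutes S}" using insert.prems finite_permutations by blast
  have sub: "{p. p permutes S \<and> p ` insert a A \<subseteq> C} \<subseteq> (\<Union>c\<in>C. X c)"
  proof
    fix p assume p: "p \<in> {p. p permutes S \<and> p ` insert a A \<subseteq> C}"
    then have pa: "p a \<in> C" and pp: "p permutes S" by auto
    have "p ` A \<subseteq> C - {p a}"
    proof
      fix y assume "y \<in> p ` A"
      then obtain x where x: "x \<in> A" "y = p x" by auto
      then have "x \<noteq> a" using insert.hyps by auto
      then have "p x \<noteq> p a" using permutes_inj[OF pp] by (auto dest: injD)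
      then show "y \<in> C - {p a}" using x p by auto
    qed
    then show "p \<in> (\<Union>c\<in>C. X c)" using pa pp unfolding X_def by auto
  qed
  have XY: "card (X c) \<le> card (Y c)" if c: "c \<in> C" for c
  proof -
    have cS: "c \<in> S" and aS: "a \<in> S" using c insert.prems by auto
    have fY: "finite (Y c)" unfolding Y_def
      using finite_permutations[of "S - {a}"] insert.prems by auto
    have inj: "inj_on (\<lambda>p. transpose a c \<circ> p) (X c)"
      by (rule inj_onI) (metis comp_assoc transpose_comp_involutory id_comp)
    have img: "(\<lambda>p. transpose a c \<circ> p) ` X c \<subseteq> Y c"
    proof
      fix q assume "q \<in> (\<lambda>p. transpose a c \<circ> p) ` X c"
      then obtain p where p: "p \<in> X c" "q = transpose a c \<circ> p" by auto
      have pp: "p permutes S" "p a = c" "p ` A \<subseteq> C - {c}" using p unfolding X_def by auto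
      have qS: "q permutes S" using p(2) permutes_compose[OF pp(1) permutes_swap_id[OF aS cS]] by simp
      have "q a = a" using p(2) pp(2) by simp
      then have "q permutes (S - {a})" by (intro permutes_superset[OF qS]) auto
      moreover have "q ` A \<subseteq> transpose a c ` (C - {c})" using p(2) pp(3) by (auto simp: image_comp[symmetric])
      ultimately show "q \<in> Y c" unfolding Y_def by auto
    qed
    show ?thesis using card_inj_on_le[OF inj img fY] .
  qed
  have YB: "card (Y c) \<le> ff (card C - 1) (card A) * fact (card S - 1 - card A)" if c: "c \<in> C" for c
  proof -
    have cS: "c \<in> S" and aS: "a \<in> S" using c insert.prems by auto
    have "transpose a c ` (C - {c}) \<subseteq> S - {a}"
    proof
      fix y assume "y \<in> transpose a c ` (C - {c})"
      then obtain x where x: "x \<in> C" "x \<noteq> c" "y = transpose a c x" by auto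
      then have "y \<noteq> a" by (auto simp: transpose_def)
      moreover have "y \<in> S" using x aS cS insert.prems by (auto simp: transpose_def)
      ultimately show "y \<in> S - {a}" by auto
    qed
    moreover have "A \<subseteq> S - {a}" using insert.prems insert.hyps by auto
    ultimately have "card (Y c) \<le> ff (card (transpose a c ` (C - {c}))) (card A) * fact (card (S - {a}) - card A)"
      unfolding Y_def using insert.IH[of "S - {a}" "transpose a c ` (C - {c})"] insert.prems by auto
    moreover have "card (transpose a c ` (C - {c})) = card C - 1"
    proof -
      have fC: "finite C" using insert.prems finite_subset by blast
      have "card (transpose a c ` (C - {c})) = card (C - {c})" by (rule card_image) simp
      then show ?thesis using fC c by simp
    qed
    moreover have "card (S - {a}) = card S - 1" using aS insert.prems by simp
    ultimately show ?thesis by simp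
  qed
  have "card {p. p permutes S \<and> p ` insert a A \<subseteq> C} \<le> card (\<Union>c\<in>C. X c)"
  proof (rule card_mono[OF _ sub])
    have "(\<Union>c\<in>C. X c) \<subseteq> {p. p permutes S}" unfolding X_def by blast
    then show "finite (\<Union>c\<in>C. X c)" using fin finite_subset by blast
  qed
  also have "\<dots> \<le> (\<Sum>c\<in>C. card (X c))"
    by (rule card_UN_le) (meson insert.prems finite_subset)
  also have "\<dots> \<le> (\<Sum>c\<in>C. ff (card C - 1) (card A) * fact (card S - 1 - card A))"
    by (rule sum_mono) (use XY YB le_trans in blast)
  also have "\<dots> = ff (card C) (card (insert a A)) * fact (card S - card (insert a A))"
    using insert.hyps by (simp add: ff_Suc)
  finally show ?case .
qed

lemma ratio_bound: "ff (4*t) t * 5^t \<le> 4^t * ff (5*t) t"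
proof -
  have "ff (4*t) t * 5^t = (\<Prod>j<t. (4*t - j) * 5)"
    unfolding ff_def by (simp add: prod.distrib prod_constant)
  also have "\<dots> \<le> (\<Prod>j<t. 4 * (5*t - j))"
    by (rule prod_mono) auto
  also have "\<dots> = 4^t * ff (5*t) t"
    unfolding ff_def by (simp add: prod.distrib prod_constant)
  finally show ?thesis .
qed

lemma M_bound: "ff (4*t) t * fact (4*t) * 5^t \<le> 4^t * (fact (5*t) :: nat)"
proof -
  have e: "ff (5*t) t * fact (4*t) = (fact (5*t) :: nat)"
    using ff_fact[of t "5*t"] by (simp add: numeral_eq_Suc)
  have "ff (4*t) t * fact (4*t) * 5^t = (ff (4*t) t * 5^t) * fact (4*t)" by simp
  also have "\<dots> \<le> (4^t * ff (5*t) t) * fact (4*t)" using ratio_bound by (rule mult_right_mono) simp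
  also have "\<dots> = 4^t * fact (5*t)" using e by (simp add: mult.assoc)
  finally show ?thesis .
qed

lemma expander_exists:
  assumes t: "t \<ge> 1"
  shows "\<exists>P. (\<forall>i<32::nat. P i permutes {0..<5*t}) \<and>
    (\<forall>A B. A \<subseteq> {0..<5*t} \<longrightarrow> B \<subseteq> {0..<5*t} \<longrightarrow> card A = t \<longrightarrow> card B = t \<longrightarrow>
       (\<exists>i<32::nat. P i ` A \<inter> B \<noteq> {}))"
proof -
  define d :: nat where "d = 32"
  define n where "n = 5*t"
  define S where "S = {0..<n}"
  define M where "M = ff (4*t) t * fact (4*t)"
  have fS: "finite S" and cS: "card S = n" unfolding S_def by auto
  define Tup where "Tup = PiE {..<d} (\<lambda>_. {p. p permutes S})"
  define Pairs where "Pairs = {A. A \<subseteq> S \<and> card A = t} \<times> {B. B \<subseteq> S \<and> card B = t}"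
  define Bad where "Bad AB = PiE {..<d} (\<lambda>_. {p. p permutes S \<and> p ` (fst AB) \<subseteq> S - snd AB})" for AB
  have fP: "finite {p. p permutes S}" using fS finite_permutations by blast
  have cTup: "card Tup = fact n ^ d"
    unfolding Tup_def by (simp add: card_PiE card_permutations[OF cS fS])
  have fTup: "finite Tup" unfolding Tup_def using fP by (simp add: finite_PiE)
  have cBad: "card (Bad AB) \<le> M ^ d" if "AB \<in> Pairs" for AB
  proof -
    obtain A B where AB0: "AB = (A,B)" by (cases AB)
    then have AB: "AB = (A,B)" "A \<subseteq> S" "B \<subseteq> S" "card A = t" "card B = t"
      using that unfolding Pairs_def by auto
    have "card (S - B) = 4*t" using AB fS cS unfolding n_def by (simp add: card_Diff_subset finite_subset)
    moreover have "card S - card A = 4*t" using AB cS unfolding n_def by simp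
    moreover have "card {p. p permutes S \<and> p ` A \<subseteq> S - B} \<le> ff (card (S - B)) (card A) * fact (card S - card A)"
      using count_perms[OF finite_subset[OF AB(2) fS] fS AB(2) Diff_subset] .
    ultimately have N: "card {p. p permutes S \<and> p ` A \<subseteq> S - B} \<le> M"
      unfolding M_def using AB by simp
    have "card (Bad AB) = card {p. p permutes S \<and> p ` A \<subseteq> S - B} ^ d"
      unfolding Bad_def AB by (simp add: card_PiE)
    also have "\<dots> \<le> M ^ d" using N by (rule power_mono) simp
    finally show ?thesis .
  qed
  have cPairs: "card Pairs \<le> 2^n * 2^n"
  proof -
    have "Pairs \<subseteq> Pow S \<times> Pow S" unfolding Pairs_def by auto
    then have "card Pairs \<le> card (Pow S \<times> Pow S)" by (intro card_mono) (use fS in auto)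
    also have "\<dots> = 2^n * 2^n" using fS cS by (simp add: card_cartesian_product card_Pow)
    finally show ?thesis .
  qed
  have fPairs: "finite Pairs" unfolding Pairs_def using fS by auto
  have "card (\<Union>AB\<in>Pairs. Bad AB) \<le> (\<Sum>AB\<in>Pairs. card (Bad AB))"
    using fPairs by (rule card_UN_le)
  also have "\<dots> \<le> (\<Sum>AB\<in>Pairs. M ^ d)" by (rule sum_mono) (use cBad in auto)
  also have "\<dots> = card Pairs * M^d" by simp
  also have "\<dots> \<le> 2^n * 2^n * M^d" using cPairs by simp
  also have "\<dots> < fact n ^ d"
  proof -
    have "(M * 5^t)^d \<le> (4^t * fact n)^d"
      using M_bound[of t] unfolding M_def n_def by (rule power_mono) simp
    then have a: "M^d * 5^(t*d) \<le> 4^(t*d) * fact n ^ d"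
      by (simp add: power_mult_distrib power_mult)
    have b: "(2::nat)^n * 2^n * 4^(t*d) < 5^(t*d)"
    proof -
      have e74: "(2::nat)^5 * 2^5 * 4^32 = 2^74" by simp
      have "(2::nat)^n * 2^n * 4^(t*d) = (2^5)^t * (2^5)^t * (4^32)^t"
        unfolding n_def d_def by (simp only: power_mult mult.commute[of t])
      also have "\<dots> = (2^5 * 2^5 * 4^32)^t" by (simp only: power_mult_distrib)
      also have "\<dots> = (2^74)^t" by (simp only: e74)
      also have "\<dots> < (5^32)^t" using t by (intro power_strict_mono) auto
      also have "\<dots> = 5^(t*d)" unfolding d_def by (simp only: power_mult mult.commute[of t])
      finally show ?thesis .
    qed
    have c: "2^n * 2^n * M^d * 5^(t*d) \<le> 2^n * 2^n * (4^(t*d) * fact n ^ d)"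
      using a by (simp add: mult.assoc)
    also have "\<dots> = (2^n * 2^n * 4^(t*d)) * fact n ^ d" by (simp add: mult_ac)
    also have "\<dots> < 5^(t*d) * fact n ^ d" using b by (intro mult_strict_right_mono) auto
    finally have "(2^n * 2^n * M^d) * 5^(t*d) < fact n ^ d * 5^(t*d)" by (simp add: mult_ac)
    then show ?thesis by (rule mult_less_cancel2[THEN iffD1, THEN conjunct2])
  qed
  also have "\<dots> = card Tup" using cTup by simp
  finally have "card (\<Union>AB\<in>Pairs. Bad AB) < card Tup" .
  have "\<not> Tup \<subseteq> (\<Union>AB\<in>Pairs. Bad AB)"
  proof
    assume "Tup \<subseteq> (\<Union>AB\<in>Pairs. Bad AB)"
    moreover have "finite (\<Union>AB\<in>Pairs. Bad AB)"
    proof (rule finite_UN_I[OF fPairs])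
      fix AB show "finite (Bad AB)" unfolding Bad_def
        by (rule finite_PiE) (use fP in auto)
    qed
    ultimately have "card Tup \<le> card (\<Union>AB\<in>Pairs. Bad AB)" by (rule card_mono[rotated])
    with \<open>card (\<Union>AB\<in>Pairs. Bad AB) < card Tup\<close> show False by simp
  qed
  then obtain P where P: "P \<in> Tup" "P \<notin> (\<Union>AB\<in>Pairs. Bad AB)" by blast
  have perm: "\<forall>i<32::nat. P i permutes {0..<5*t}" using P(1) unfolding Tup_def d_def S_def n_def by auto
  have "\<exists>i<32::nat. P i ` A \<inter> B \<noteq> {}"
    if "A \<subseteq> {0..<5*t}" "B \<subseteq> {0..<5*t}" "card A = t" "card B = t" for A B
  proof (rule ccontr)
    assume H: "\<not> (\<exists>i<32::nat. P i ` A \<inter> B \<noteq> {})"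
    have "P i ` A \<subseteq> S - B" if i: "i < d" for i
    proof -
      have pi: "P i permutes S" using perm i unfolding d_def S_def n_def by auto
      have "P i ` A \<subseteq> P i ` S" using \<open>A \<subseteq> {0..<5*t}\<close> unfolding S_def n_def by (rule image_mono)
      then have "P i ` A \<subseteq> S" using permutes_image[OF pi] by simp
      then show ?thesis using H i unfolding d_def by auto
    qed
    then have "P \<in> Bad (A,B)" using P(1) unfolding Bad_def Tup_def by auto
    moreover have "(A,B) \<in> Pairs" using that unfolding Pairs_def S_def n_def by auto
    ultimately show False using P(2) by blast
  qed
  then show ?thesis using perm by blast
qed

definition Rel :: "nat set set \<Rightarrow> nat set \<Rightarrow> (nat \<times> nat) set" where
  "Rel E S = {(a,b). {a,b} \<in> E \<and> a \<in> S \<and> b \<in> S}"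

lemma Rel_sym: "(a,b) \<in> Rel E S \<Longrightarrow> (b,a) \<in> Rel E S"
  by (auto simp: Rel_def insert_commute)

lemma Rel_rtrancl_sym: "(a,b) \<in> (Rel E S)\<^sup>* \<Longrightarrow> (b,a) \<in> (Rel E S)\<^sup>*"
proof (induction rule: rtrancl_induct)
  case base then show ?case by simp
next
  case (step y z)
  then show ?case by (meson Rel_sym converse_rtrancl_into_rtrancl)
qed

lemma Rel_mono: "E \<subseteq> E' \<Longrightarrow> S \<subseteq> S' \<Longrightarrow> Rel E S \<subseteq> Rel E' S'"
  by (auto simp: Rel_def)

lemma Rel_rtrancl_mono: "E \<subseteq> E' \<Longrightarrow> S \<subseteq> S' \<Longrightarrow> (Rel E S)\<^sup>* \<subseteq> (Rel E' S')\<^sup>*"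
  by (intro rtrancl_mono Rel_mono)

lemma Rel_rtrancl_in: "(a,b) \<in> (Rel E S)\<^sup>* \<Longrightarrow> a \<in> S \<Longrightarrow> b \<in> S"
  by (induction rule: rtrancl_induct) (auto simp: Rel_def)

lemma walk_Cons2: "walk E (x # y # zs) \<longleftrightarrow> {x,y} \<in> E \<and> walk E (y # zs)"
proof
  assume w: "walk E (x # y # zs)"
  have "Suc 0 < length (x # y # zs)" by simp
  then have "{(x # y # zs) ! 0, (x # y # zs) ! Suc 0} \<in> E" using w unfolding walk_def by blast
  then have "{x,y} \<in> E" by simp
  moreover have "walk E (y # zs)" unfolding walk_def
  proof (intro conjI allI impI)
    fix i assume "Suc i < length (y # zs)"
    then have "Suc (Suc i) < length (x # y # zs)" by simp
    then have "{(x # y # zs) ! Suc i, (x # y # zs) ! Suc (Suc i)} \<in> E" using w unfolding walk_def by blast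
    then show "{(y # zs) ! i, (y # zs) ! Suc i} \<in> E" by simp
  qed simp
  ultimately show "{x,y} \<in> E \<and> walk E (y # zs)" by simp
next
  assume a: "{x,y} \<in> E \<and> walk E (y # zs)"
  show "walk E (x # y # zs)" unfolding walk_def
  proof (intro conjI allI impI)
    fix i assume i: "Suc i < length (x # y # zs)"
    show "{(x # y # zs) ! i, (x # y # zs) ! Suc i} \<in> E"
    proof (cases i)
      case 0 then show ?thesis using a by simp
    next
      case (Suc j)
      then have "Suc j < length (y # zs)" using i by simp
      then have "{(y # zs) ! j, (y # zs) ! Suc j} \<in> E" using a unfolding walk_def by blast
      then show ?thesis using Suc by simp
    qed
  qed simp
qed

lemma walk_relpow: "walk E xs \<Longrightarrow> set xs \<subseteq> S \<Longrightarrow> (hd xs, last xs) \<in> (Rel E S) ^^ (length xs - 1)"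
proof (induction xs)
  case Nil then show ?case by (simp add: walk_def)
next
  case (Cons x ys)
  show ?case
  proof (cases ys)
    case Nil then show ?thesis by simp
  next
    case (Cons y zs)
    have w: "{x,y} \<in> E" "walk E ys" using Cons.prems \<open>ys = y # zs\<close> walk_Cons2 by auto
    have "(hd ys, last ys) \<in> (Rel E S) ^^ (length ys - 1)" using Cons.IH w Cons.prems by auto
    then have h1: "(y, last ys) \<in> (Rel E S) ^^ (length ys - 1)" using \<open>ys = y # zs\<close> by simp
    have h2: "(x, y) \<in> Rel E S" using w Cons.prems \<open>ys = y # zs\<close> by (auto simp: Rel_def)
    have "(x, last ys) \<in> (Rel E S) ^^ Suc (length ys - 1)"
      by (rule relpow_Suc_I2[OF h2 h1])
    then show ?thesis using \<open>ys = y # zs\<close> by simp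
  qed
qed

lemma walk_rtrancl: "walk E xs \<Longrightarrow> set xs \<subseteq> S \<Longrightarrow> (hd xs, last xs) \<in> (Rel E S)\<^sup>*"
  using walk_relpow relpow_imp_rtrancl by blast

lemma connected_on_rtrancl: "connected_on E S \<Longrightarrow> x \<in> S \<Longrightarrow> y \<in> S \<Longrightarrow> (x,y) \<in> (Rel E S)\<^sup>*"
  unfolding connected_on_def using walk_rtrancl by metis

lemma graph_edge_ex: "graph V E \<Longrightarrow> e \<in> E \<Longrightarrow> \<exists>u v. e = {u, v} \<and> u \<in> V \<and> v \<in> V \<and> u \<noteq> v"
proof -
  assume g: "graph V E" and e: "e \<in> E"
  have "\<forall>e\<in>E. \<exists>u v. e = {u, v} \<and> u \<in> V \<and> v \<in> V \<and> u \<noteq> v" using g unfolding graph_def by (rule conjunct2)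
  then show ?thesis using e by (rule bspec)
qed

lemma graph_edge: "graph V E \<Longrightarrow> {a,b} \<in> E \<Longrightarrow> a \<noteq> b \<and> a \<in> V \<and> b \<in> V"
proof -
  assume g: "graph V E" and e: "{a,b} \<in> E"
  obtain u v where uv: "{a,b} = {u,v}" "u \<in> V" "v \<in> V" "u \<noteq> v" using graph_edge_ex[OF g e] by blast
  then have "(a = u \<and> b = v) \<or> (a = v \<and> b = u)" by (simp add: doubleton_eq_iff)
  then show ?thesis using uv(2-4) by blast
qed

lemma graph_edge_sub: "graph V E \<Longrightarrow> e \<in> E \<Longrightarrow> e \<subseteq> V"
proof -
  assume g: "graph V E" and e: "e \<in> E"
  obtain u v where uv: "e = {u,v}" "u \<in> V" "v \<in> V" using graph_edge_ex[OF g e] by blast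
  then show ?thesis by simp
qed

lemma graph_finE: "graph V E \<Longrightarrow> finite E"
proof -
  assume g: "graph V E"
  then have "E \<subseteq> Pow V" using graph_edge_sub by blast
  moreover have "finite V" using g unfolding graph_def by simp
  ultimately show ?thesis by (meson finite_Pow_iff finite_subset)
qed

lemma conn_card:
  assumes g: "graph V E" and ne: "V \<noteq> {}" and conn: "\<forall>x\<in>V. \<forall>y\<in>V. (x,y) \<in> (Rel E V)\<^sup>*"
  shows "card V \<le> card E + 1"
proof -
  obtain r where r: "r \<in> V" using ne by blast
  define R where "R = Rel E V"
  define dist where "dist v = (LEAST k. (r,v) \<in> R^^k)" for v
  have ex: "\<exists>k. (r,v) \<in> R^^k" if "v \<in> V" for v
    using conn r that rtrancl_power unfolding R_def by blast
  have din: "(r,v) \<in> R^^(dist v)" if "v \<in> V" for v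
    unfolding dist_def using ex[OF that] by (rule LeastI_ex)
  have dle: "dist v \<le> k" if "(r,v) \<in> R^^k" for v k
    unfolding dist_def using that by (rule Least_le)
  have dpos: "dist v \<noteq> 0" if "v \<in> V" "v \<noteq> r" for v
    using din[OF that(1)] that(2) by (cases "dist v") auto
  define p where "p v = (SOME u. (r,u) \<in> R^^(dist v - 1) \<and> (u,v) \<in> R)" for v
  have p: "(r, p v) \<in> R^^(dist v - 1) \<and> (p v, v) \<in> R" if "v \<in> V" "v \<noteq> r" for v
  proof -
    have "(r,v) \<in> R^^(Suc (dist v - 1))" using din[OF that(1)] dpos[OF that] by simp
    then have "\<exists>u. (r,u) \<in> R^^(dist v - 1) \<and> (u,v) \<in> R" by (auto elim: relpow_Suc_E)
    then show ?thesis unfolding p_def by (rule someI_ex)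
  qed
  have pd: "dist (p v) = dist v - 1" if "v \<in> V" "v \<noteq> r" for v
  proof -
    have a: "dist (p v) \<le> dist v - 1" using p[OF that] dle by blast
    have pV: "p v \<in> V" using p[OF that] unfolding R_def Rel_def by auto
    have "(r, v) \<in> R^^(Suc (dist (p v)))" using din[OF pV] p[OF that] by (auto intro: relpow_Suc_I)
    then have "dist v \<le> Suc (dist (p v))" by (rule dle)
    then show ?thesis using a by simp
  qed
  define f where "f v = {p v, v}" for v
  have fE: "f ` (V - {r}) \<subseteq> E"
  proof
    fix e assume "e \<in> f ` (V - {r})"
    then obtain v where v: "v \<in> V" "v \<noteq> r" "e = {p v, v}" unfolding f_def by auto
    then show "e \<in> E" using p[OF v(1,2)] unfolding R_def Rel_def by auto
  qed
  have inj: "inj_on f (V - {r})"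
  proof (rule inj_onI)
    fix v w assume v: "v \<in> V - {r}" and w: "w \<in> V - {r}" and eq: "f v = f w"
    show "v = w"
    proof (rule ccontr)
      assume ne: "v \<noteq> w"
      then have "p v = w \<and> p w = v" using eq unfolding f_def by (auto simp: doubleton_eq_iff)
      then have pv: "p v = w" "p w = v" by auto
      have a1: "dist (p v) = dist v - 1" using pd v by blast
      have a2: "dist (p w) = dist w - 1" using pd w by blast
      have "dist w = dist v - 1" "dist v = dist w - 1" using a1 a2 unfolding pv by auto
      moreover have "dist v \<noteq> 0" "dist w \<noteq> 0" using dpos v w by auto
      ultimately show False by arith
    qed
  qed
  have "card (V - {r}) \<le> card E" using card_inj_on_le[OF inj fE graph_finE[OF g]] .
  moreover have "card (V - {r}) = card V - 1" using r by simp
  ultimately show ?thesis by simp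
qed

lemma tree_cut:
  assumes T: "tree VT ET" and e: "{x,y} \<in> ET"
  shows "(x,y) \<notin> (Rel (ET - {{x,y}}) VT)\<^sup>*"
proof
  assume H: "(x,y) \<in> (Rel (ET - {{x,y}}) VT)\<^sup>*"
  define ET' where "ET' = ET - {{x,y}}"
  have g: "graph VT ET" using T unfolding tree_def by simp
  then have g': "graph VT ET'" unfolding ET'_def graph_def by blast
  have xy: "x \<noteq> y" "x \<in> VT" "y \<in> VT" using graph_edge[OF g e] by auto
  have sub: "Rel ET VT \<subseteq> (Rel ET' VT)\<^sup>*"
  proof
    fix ab assume ab: "ab \<in> Rel ET VT"
    obtain a b where abd: "ab = (a,b)" by (cases ab)
    show "ab \<in> (Rel ET' VT)\<^sup>*"
    proof (cases "{a,b} = {x,y}")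
      case True
      then have "(a = x \<and> b = y) \<or> (a = y \<and> b = x)" by (metis doubleton_eq_iff)
      then show ?thesis
      proof
        assume "a = x \<and> b = y" then show ?thesis using H abd unfolding ET'_def by simp
      next
        assume "a = y \<and> b = x" then show ?thesis using Rel_rtrancl_sym[OF H] abd unfolding ET'_def by simp
      qed
    next
      case False
      then have "(a,b) \<in> Rel ET' VT" using ab abd unfolding ET'_def Rel_def by auto
      then show ?thesis using abd by auto
    qed
  qed
  have conn: "\<forall>a\<in>VT. \<forall>b\<in>VT. (a,b) \<in> (Rel ET' VT)\<^sup>*"
  proof (intro ballI)
    fix a b assume "a \<in> VT" "b \<in> VT"
    then have "(a,b) \<in> (Rel ET VT)\<^sup>*" using T connected_on_rtrancl unfolding tree_def by blast
    then show "(a,b) \<in> (Rel ET' VT)\<^sup>*" using rtrancl_subset_rtrancl[OF sub] by blast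
  qed
  have ne: "VT \<noteq> {}" using xy by auto
  have "card VT \<le> card ET' + 1" using conn_card[OF g' ne conn] .
  moreover have "card ET' = card ET - 1" unfolding ET'_def using e graph_finE[OF g] by simp
  moreover have "card ET = card VT - 1" using T unfolding tree_def by simp
  moreover have "card VT \<ge> 2"
  proof -
    have "finite VT" using g unfolding graph_def by simp
    then have "card {x,y} \<le> card VT" using xy by (intro card_mono) auto
    then show ?thesis using xy by simp
  qed
  ultimately show False by simp
qed

lemma Rel_avoid:
  assumes "x \<notin> S \<or> y \<notin> S" "S \<subseteq> VT"
  shows "Rel ET S \<subseteq> Rel (ET - {{x,y}}) VT"
  using assms by (auto simp: Rel_def doubleton_eq_iff)

lemma Rel_rtrancl_avoid:
  assumes "x \<notin> S \<or> y \<notin> S" "S \<subseteq> VT"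
  shows "(Rel ET S)\<^sup>* \<subseteq> (Rel (ET - {{x,y}}) VT)\<^sup>*"
  using Rel_avoid[OF assms] by (rule rtrancl_mono)

lemma subset_sum:
  fixes w :: "nat \<Rightarrow> nat"
  assumes "finite I" "\<forall>i\<in>I. w i \<le> M"
  shows "\<exists>J\<subseteq>I. 2 * sum w J \<le> sum w I + M \<and> sum w I \<le> 2 * sum w J + M"
  using assms
proof (induction I rule: finite_induct)
  case empty then show ?case by simp
next
  case (insert i I)
  then obtain J where J: "J \<subseteq> I" "2 * sum w J \<le> sum w I + M" "sum w I \<le> 2 * sum w J + M" by auto
  have wi: "w i \<le> M" using insert.prems by simp
  have sI: "sum w (insert i I) = w i + sum w I" using insert.hyps by simp
  show ?case
  proof (cases "sum w I \<le> 2 * sum w J")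
    case True
    then show ?thesis using J wi sI by (intro exI[of _ J]) auto
  next
    case False
    have iJ: "i \<notin> J" using J(1) insert.hyps by auto
    have fJ: "finite J" using J(1) insert.hyps finite_subset by blast
    have sJ: "sum w (insert i J) = w i + sum w J" using iJ fJ by simp
    show ?thesis using J wi sI sJ False by (intro exI[of _ "insert i J"]) auto
  qed
qed

locale tdec =
  fixes V :: "nat set" and E :: "nat set set" and VT :: "nat set" and ET :: "nat set set"
    and B :: "nat \<Rightarrow> nat set"
  assumes gV: "graph V E" and td: "tree_decomposition V E VT ET B"
begin

lemma T: "tree VT ET" using td unfolding tree_decomposition_def by simp
lemma gT: "graph VT ET" using T unfolding tree_def by simp
lemma finVT: "finite VT" using gT unfolding graph_def by simp
lemma finV: "finite V" using gV unfolding graph_def by simp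
lemma VTne: "VT \<noteq> {}" using T unfolding tree_def by simp
lemma connT: "x \<in> VT \<Longrightarrow> y \<in> VT \<Longrightarrow> (x,y) \<in> (Rel ET VT)\<^sup>*"
  using T connected_on_rtrancl unfolding tree_def by blast
lemma bagsub: "x \<in> VT \<Longrightarrow> B x \<subseteq> V" using td unfolding tree_decomposition_def by blast
lemma edgebag: "e \<in> E \<Longrightarrow> \<exists>x\<in>VT. e \<subseteq> B x" using td unfolding tree_decomposition_def by blast
lemma vbag: "v \<in> V \<Longrightarrow> \<exists>x\<in>VT. v \<in> B x" using td unfolding tree_decomposition_def by blast
lemma vconn: "v \<in> V \<Longrightarrow> z \<in> VT \<Longrightarrow> v \<in> B z \<Longrightarrow> z' \<in> VT \<Longrightarrow> v \<in> B z' \<Longrightarrow>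
    (z, z') \<in> (Rel ET {x \<in> VT. v \<in> B x})\<^sup>*"
proof -
  assume a: "v \<in> V" "z \<in> VT" "v \<in> B z" "z' \<in> VT" "v \<in> B z'"
  have "connected_on ET {x \<in> VT. v \<in> B x}" using td a(1) unfolding tree_decomposition_def by blast
  then show ?thesis using a connected_on_rtrancl by blast
qed
lemma Tedge: "{x,y} \<in> ET \<Longrightarrow> x \<noteq> y \<and> x \<in> VT \<and> y \<in> VT" using graph_edge[OF gT] .

definition side :: "nat \<Rightarrow> nat \<Rightarrow> nat set" where
  "side x y = {z. (y,z) \<in> (Rel ET (VT - {x}))\<^sup>*}"

definition U :: "nat \<Rightarrow> nat \<Rightarrow> nat set" where
  "U x y = {v \<in> V - B x. \<exists>z\<in>side x y. v \<in> B z}"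

lemma side_refl: "y \<in> side x y" unfolding side_def by simp

lemma side_sub: "{x,y} \<in> ET \<Longrightarrow> side x y \<subseteq> VT - {x}"
proof
  fix z assume e: "{x,y} \<in> ET" and z: "z \<in> side x y"
  have "y \<in> VT - {x}" using Tedge[OF e] by auto
  then show "z \<in> VT - {x}" using z Rel_rtrancl_in unfolding side_def by blast
qed

lemma side_cover:
  assumes x: "x \<in> VT" and z: "z \<in> VT" "z \<noteq> x"
  shows "\<exists>y. {x,y} \<in> ET \<and> z \<in> side x y"
proof -
  have "(x,z) \<in> (Rel ET VT)\<^sup>*" using connT x z by blast
  then have "z = x \<or> (\<exists>y. {x,y} \<in> ET \<and> z \<in> side x y)"
  proof (induction rule: rtrancl_induct)
    case base then show ?case by simp
  next
    case (step w u)
    have e: "{w,u} \<in> ET" "w \<in> VT" "u \<in> VT" using step.hyps(2) unfolding Rel_def by auto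
    show ?case
    proof (cases "w = x")
      case True
      then show ?thesis using e side_refl by blast
    next
      case False
      then obtain y where y: "{x,y} \<in> ET" "w \<in> side x y" using step.IH by blast
      show ?thesis
      proof (cases "u = x")
        case True then show ?thesis by simp
      next
        case False
        have "w \<in> VT - {x}" using side_sub[OF y(1)] y(2) by blast
        then have "(w,u) \<in> Rel ET (VT - {x})" using e False unfolding Rel_def by auto
        moreover have "(y,w) \<in> (Rel ET (VT - {x}))\<^sup>*" using y(2) unfolding side_def by simp
        ultimately have "(y,u) \<in> (Rel ET (VT - {x}))\<^sup>*" by (meson rtrancl_into_rtrancl)
        then have "u \<in> side x y" unfolding side_def by simp
        then show ?thesis using y(1) by blast
      qed
    qed
  qed
  then show ?thesis using z by blast
qed

lemma side_disj:
  assumes e1: "{x,y} \<in> ET" and e2: "{x,y'} \<in> ET" and ne: "y \<noteq> y'"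
  shows "side x y \<inter> side x y' = {}"
proof (rule ccontr)
  assume "side x y \<inter> side x y' \<noteq> {}"
  then obtain z where "z \<in> side x y" "z \<in> side x y'" by blast
  then have "(y,z) \<in> (Rel ET (VT - {x}))\<^sup>*" "(y',z) \<in> (Rel ET (VT - {x}))\<^sup>*" unfolding side_def by auto
  then have "(y',y) \<in> (Rel ET (VT - {x}))\<^sup>*" using Rel_rtrancl_sym by (meson rtrancl_trans)
  then have a: "(y',y) \<in> (Rel (ET - {{x,y}}) VT)\<^sup>*"
    using Rel_rtrancl_avoid[of x "VT - {x}" y VT ET] by blast
  have "{x,y'} \<noteq> {x,y}" using ne by (auto simp: doubleton_eq_iff)
  then have "(x,y') \<in> Rel (ET - {{x,y}}) VT" using e2 Tedge[OF e2] unfolding Rel_def by auto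
  then have "(x,y) \<in> (Rel (ET - {{x,y}}) VT)\<^sup>*" using a by (rule converse_rtrancl_into_rtrancl)
  then show False using tree_cut[OF T e1] by blast
qed

lemma U_sub: "U x y \<subseteq> V" unfolding U_def by auto

lemma U_closed:
  assumes e: "{x,y} \<in> ET" and v: "v \<in> U x y" and z': "z' \<in> VT" "v \<in> B z'"
  shows "z' \<in> side x y"
proof -
  obtain z where z: "z \<in> side x y" "v \<in> B z" and vV: "v \<in> V" "v \<notin> B x" using v unfolding U_def by auto
  have zVT: "z \<in> VT" using side_sub[OF e] z(1) by blast
  have "(z,z') \<in> (Rel ET {w \<in> VT. v \<in> B w})\<^sup>*" using vconn[OF vV(1) zVT z(2) z'] .
  moreover have "{w \<in> VT. v \<in> B w} \<subseteq> VT - {x}" using vV by auto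
  ultimately have "(z,z') \<in> (Rel ET (VT - {x}))\<^sup>*" using Rel_rtrancl_mono[of ET ET] by blast
  moreover have "(y,z) \<in> (Rel ET (VT - {x}))\<^sup>*" using z(1) unfolding side_def by simp
  ultimately have "(y,z') \<in> (Rel ET (VT - {x}))\<^sup>*" by (meson rtrancl_trans)
  then show ?thesis unfolding side_def by simp
qed

lemma U_cover:
  assumes x: "x \<in> VT" and v: "v \<in> V" "v \<notin> B x"
  shows "\<exists>y. {x,y} \<in> ET \<and> v \<in> U x y"
proof -
  obtain z where z: "z \<in> VT" "v \<in> B z" using vbag[OF v(1)] by blast
  then have "z \<noteq> x" using v by auto
  then obtain y where "{x,y} \<in> ET" "z \<in> side x y" using side_cover[OF x z(1)] by blast
  then show ?thesis using z v unfolding U_def by blast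
qed

lemma U_disj:
  assumes e1: "{x,y} \<in> ET" and e2: "{x,y'} \<in> ET" and ne: "y \<noteq> y'"
  shows "U x y \<inter> U x y' = {}"
proof (rule ccontr)
  assume "U x y \<inter> U x y' \<noteq> {}"
  then obtain v where v: "v \<in> U x y" "v \<in> U x y'" by blast
  then obtain z where z: "z \<in> side x y" "v \<in> B z" unfolding U_def by auto
  have "z \<in> VT" using side_sub[OF e1] z(1) by blast
  then have "z \<in> side x y'" using U_closed[OF e2 v(2)] z(2) by blast
  then show False using side_disj[OF e1 e2 ne] z(1) by blast
qed

lemma U_edge:
  assumes e: "{x,y} \<in> ET" and u: "u \<in> U x y" and uw: "{u,w} \<in> E" and w: "w \<in> V" "w \<notin> B x"
  shows "w \<in> U x y"
proof -
  obtain z where z: "z \<in> VT" "{u,w} \<subseteq> B z" using edgebag[OF uw] by blast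
  then have "z \<in> side x y" using U_closed[OF e u] by blast
  then show ?thesis using z w unfolding U_def by blast
qed

lemma U_back:
  assumes e: "{x,y} \<in> ET"
  shows "U x y \<inter> U y x = {}"
proof (rule ccontr)
  assume "U x y \<inter> U y x \<noteq> {}"
  then obtain v where v: "v \<in> U x y" "v \<in> U y x" by blast
  obtain z1 where z1: "z1 \<in> side x y" "v \<in> B z1" using v(1) unfolding U_def by auto
  obtain z2 where z2: "z2 \<in> side y x" "v \<in> B z2" using v(2) unfolding U_def by auto
  have vV: "v \<in> V" "v \<notin> B x" "v \<notin> B y" using v unfolding U_def by auto
  have e': "{y,x} \<in> ET" using e by (simp add: insert_commute)
  have z1VT: "z1 \<in> VT" using side_sub[OF e] z1(1) by blast
  have z2VT: "z2 \<in> VT" using side_sub[OF e'] z2(1) by blast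
  have a: "(z2,z1) \<in> (Rel ET {w \<in> VT. v \<in> B w})\<^sup>*" using vconn[OF vV(1) z2VT z2(2) z1VT z1(2)] .
  have a': "(z2,z1) \<in> (Rel (ET - {{x,y}}) VT)\<^sup>*"
    using a Rel_rtrancl_avoid[of x "{w \<in> VT. v \<in> B w}" y VT ET] vV(2) by blast
  have b: "(x,z2) \<in> (Rel ET (VT - {y}))\<^sup>*" using z2(1) unfolding side_def by simp
  have b': "(x,z2) \<in> (Rel (ET - {{x,y}}) VT)\<^sup>*"
    using b Rel_rtrancl_avoid[of x "VT - {y}" y VT ET] by blast
  have c: "(y,z1) \<in> (Rel ET (VT - {x}))\<^sup>*" using z1(1) unfolding side_def by simp
  then have "(z1,y) \<in> (Rel ET (VT - {x}))\<^sup>*" by (rule Rel_rtrancl_sym)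
  then have c': "(z1,y) \<in> (Rel (ET - {{x,y}}) VT)\<^sup>*"
    using Rel_rtrancl_avoid[of x "VT - {x}" y VT ET] by blast
  have "(x,y) \<in> (Rel (ET - {{x,y}}) VT)\<^sup>*" using rtrancl_trans[OF rtrancl_trans[OF b' a'] c'] .
  then show False using tree_cut[OF T e] by blast
qed

end

context tdec
begin

lemma side_nest:
  assumes e1: "{x,y} \<in> ET" and e2: "{y,y'} \<in> ET" and ne: "y' \<noteq> x"
  shows "side y y' \<subset> side x y"
proof -
  have e1': "{y,x} \<in> ET" using e1 by (simp add: insert_commute)
  have xn: "x \<notin> side y y'" using side_disj[OF e1' e2 ne[symmetric]] side_refl[of x y] by blast
  have yx: "y \<noteq> x" "y \<in> VT" "y' \<in> VT" using Tedge[OF e1] Tedge[OF e2] by auto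
  have sub: "(y, z) \<in> (Rel ET (VT - {x}))\<^sup>*" if "z \<in> side y y'" for z
  proof -
    have "(y', z) \<in> (Rel ET (VT - {y}))\<^sup>*" using that unfolding side_def by simp
    then show ?thesis
    proof (induction rule: rtrancl_induct)
      case base
      have "(y, y') \<in> Rel ET (VT - {x})" using e2 yx ne unfolding Rel_def by auto
      then show ?case by simp
    next
      case (step w u)
      have "w \<in> side y y'" using step.hyps(1) unfolding side_def by simp
      moreover have "u \<in> side y y'" using step.hyps unfolding side_def by (simp add: rtrancl_into_rtrancl)
      ultimately have "w \<noteq> x" "u \<noteq> x" using xn by auto
      then have "(w,u) \<in> Rel ET (VT - {x})" using step.hyps(2) unfolding Rel_def by auto
      then show ?case using step.IH by (rule rtrancl_into_rtrancl[rotated])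
    qed
  qed
  have "side y y' \<subseteq> side x y" using sub unfolding side_def by blast
  moreover have "y \<in> side x y" by (rule side_refl)
  moreover have "y \<notin> side y y'" using side_sub[OF e2] by blast
  ultimately show ?thesis by blast
qed

lemma balanced: "\<exists>x\<in>VT. \<forall>y. {x,y} \<in> ET \<longrightarrow> 2 * card (U x y) \<le> card V"
proof (cases "\<exists>x y. {x,y} \<in> ET \<and> card V < 2 * card (U x y)")
  case False
  then show ?thesis using VTne by (auto simp: not_less)
next
  case True
  then obtain x0 y0 where "{x0,y0} \<in> ET \<and> card V < 2 * card (U x0 y0)" by blast
  then obtain xy where xy: "{fst xy, snd xy} \<in> ET \<and> card V < 2 * card (U (fst xy) (snd xy))"
    and mn: "\<forall>ab. {fst ab, snd ab} \<in> ET \<and> card V < 2 * card (U (fst ab) (snd ab)) \<longrightarrow>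
               card (side (fst xy) (snd xy)) \<le> card (side (fst ab) (snd ab))"
    using ex_has_least_nat[where P = "\<lambda>ab. {fst ab, snd ab} \<in> ET \<and> card V < 2 * card (U (fst ab) (snd ab))"
        and k = "(x0,y0)" and m = "\<lambda>ab. card (side (fst ab) (snd ab))"] by auto
  define x where "x = fst xy"
  define y where "y = snd xy"
  have e: "{x,y} \<in> ET" and big: "card V < 2 * card (U x y)" using xy unfolding x_def y_def by auto
  have yVT: "y \<in> VT" using Tedge[OF e] by simp
  have "\<forall>y'. {y,y'} \<in> ET \<longrightarrow> 2 * card (U y y') \<le> card V"
  proof (intro allI impI)
    fix y' assume e2: "{y,y'} \<in> ET"
    show "2 * card (U y y') \<le> card V"
    proof (cases "y' = x")
      case True
      have "U x y \<inter> U y x = {}" using U_back[OF e] .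
      moreover have "U x y \<union> U y x \<subseteq> V" using U_sub by blast
      ultimately have "card (U x y) + card (U y x) \<le> card V"
        using finV by (metis card_Un_disjoint card_mono finite_subset sup.bounded_iff)
      then show ?thesis using True big by simp
    next
      case False
      show ?thesis
      proof (rule ccontr)
        assume "\<not> ?thesis"
        then have "card (side x y) \<le> card (side y y')"
          using mn[rule_format, of "(y,y')"] e2 unfolding x_def y_def by auto
        moreover have "side y y' \<subset> side x y" using side_nest[OF e e2 False] .
        moreover have "finite (side x y)" using side_sub[OF e] finVT finite_subset by blast
        ultimately show False using psubset_card_mono by (meson leD)
      qed
    qed
  qed
  then show ?thesis using yVT by blast
qed

lemma big_bag:
  assumes exp: "\<forall>A Bs. A \<subseteq> V \<longrightarrow> Bs \<subseteq> V \<longrightarrow> A \<inter> Bs = {} \<longrightarrow> t \<le> card A \<longrightarrow> t \<le> card Bs \<longrightarrow>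
      (\<exists>u\<in>A. \<exists>w\<in>Bs. {u,w} \<in> E)"
    and n: "card V = 5 * t"
  shows "\<exists>x\<in>VT. t < 2 * card (B x)"
proof -
  obtain x where x: "x \<in> VT" and bal: "\<forall>y. {x,y} \<in> ET \<longrightarrow> 2 * card (U x y) \<le> card V"
    using balanced by blast
  define I where "I = {y. {x,y} \<in> ET}"
  have fI: "finite I" unfolding I_def using Tedge finVT by (metis (no_types, lifting) finite_subset mem_Collect_eq subsetI)
  define M where "M = card V div 2"
  have wM: "\<forall>y\<in>I. card (U x y) \<le> M" using bal unfolding I_def M_def by auto
  obtain J where J: "J \<subseteq> I" "2 * sum (\<lambda>y. card (U x y)) J \<le> sum (\<lambda>y. card (U x y)) I + M"
      "sum (\<lambda>y. card (U x y)) I \<le> 2 * sum (\<lambda>y. card (U x y)) J + M"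
    using subset_sum[OF fI wM] by blast
  have fU: "\<forall>y\<in>K. finite (U x y)" for K using U_sub finV finite_subset by blast
  have dU: "\<forall>y\<in>K. \<forall>y'\<in>K. y \<noteq> y' \<longrightarrow> U x y \<inter> U x y' = {}" if "K \<subseteq> I" for K
    using U_disj that unfolding I_def by blast
  define A where "A = (\<Union>y\<in>J. U x y)"
  define Bs where "Bs = (\<Union>y\<in>I - J. U x y)"
  have fJ: "finite J" using J(1) fI finite_subset by blast
  have cA: "card A = sum (\<lambda>y. card (U x y)) J"
    unfolding A_def by (rule card_UN_disjoint[OF fJ fU dU[OF J(1)]])
  have cB: "card Bs = sum (\<lambda>y. card (U x y)) (I - J)"
    unfolding Bs_def by (rule card_UN_disjoint[OF _ fU dU[OF Diff_subset]]) (use fI in simp)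
  have cI: "card (\<Union>y\<in>I. U x y) = sum (\<lambda>y. card (U x y)) I"
    by (rule card_UN_disjoint[OF fI fU dU]) simp
  have sIJ: "sum (\<lambda>y. card (U x y)) (I - J) = sum (\<lambda>y. card (U x y)) I - sum (\<lambda>y. card (U x y)) J"
    using sum_diff_nat[OF fJ J(1)] .
  have sJI: "sum (\<lambda>y. card (U x y)) J \<le> sum (\<lambda>y. card (U x y)) I"
    by (rule sum_mono2[OF fI J(1)]) simp
  have cover: "V - B x = (\<Union>y\<in>I. U x y)"
  proof
    show "V - B x \<subseteq> (\<Union>y\<in>I. U x y)" using U_cover[OF x] unfolding I_def by blast
    show "(\<Union>y\<in>I. U x y) \<subseteq> V - B x" unfolding U_def by blast
  qed
  have cVB: "card V - card (B x) \<le> sum (\<lambda>y. card (U x y)) I"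
    using diff_card_le_card_Diff[of "B x" V] cover cI finite_subset[OF bagsub[OF x] finV] by simp
  have AV: "A \<subseteq> V" "Bs \<subseteq> V" unfolding A_def Bs_def using U_sub by blast+
  have disj: "A \<inter> Bs = {}"
  proof -
    have "U x y \<inter> U x y' = {}" if "y \<in> J" "y' \<in> I - J" for y y'
    proof -
      have "y \<noteq> y'" "y \<in> I" "y' \<in> I" using that J(1) by auto
      then show ?thesis using dU[OF subset_refl] by blast
    qed
    then show ?thesis unfolding A_def Bs_def by blast
  qed
  have noedge: "\<not> (\<exists>u\<in>A. \<exists>w\<in>Bs. {u,w} \<in> E)"
  proof
    assume "\<exists>u\<in>A. \<exists>w\<in>Bs. {u,w} \<in> E"
    then obtain u w y y' where u: "y \<in> J" "u \<in> U x y" and w: "y' \<in> I - J" "w \<in> U x y'" and uw: "{u,w} \<in> E"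
      unfolding A_def Bs_def by blast
    have ey: "{x,y} \<in> ET" using u(1) J(1) unfolding I_def by auto
    have wV: "w \<in> V" "w \<notin> B x" using w(2) unfolding U_def by auto
    have "w \<in> U x y" using U_edge[OF ey u(2) uw wV] .
    moreover have "y \<noteq> y'" using u(1) w(1) by auto
    ultimately show False using dU[of I] u(1) w J(1) by blast
  qed
  have "\<not> (t \<le> card A \<and> t \<le> card Bs)" using exp AV disj noedge by blast
  then have "card A < t \<or> card Bs < t" by auto
  moreover have "2 * M \<le> card V" unfolding M_def by simp
  ultimately have "2 * card (B x) > t" using J(2,3) cA cB sIJ sJI cVB n by linarith
  then show ?thesis using x by blast
qed

end

lemma conn_single: "connected_on E {a}"
  unfolding connected_on_def walk_def by (auto intro!: exI[of _ "[a]"])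

lemma triv_td: "graph V E \<Longrightarrow> tree_decomposition V E {0} {} (\<lambda>_. V)"
  unfolding tree_decomposition_def tree_def
proof (intro conjI ballI)
  assume g: "graph V E"
  show "graph {0} {}" unfolding graph_def by simp
  show "connected_on {} {0}" by (rule conn_single)
  fix v assume "v \<in> V"
  then have e: "{x \<in> {0::nat}. v \<in> V} = {0}" by auto
  show "{x \<in> {0::nat}. v \<in> V} \<noteq> {}" using e by simp
  show "connected_on {} {x \<in> {0::nat}. v \<in> V}" unfolding e by (rule conn_single)
next
  fix e assume "graph V E" "e \<in> E"
  then show "\<exists>x\<in>{0::nat}. e \<subseteq> V" using graph_edge_sub by blast
qed auto

lemma tw_lower:
  assumes g: "graph V E"
    and exp: "\<forall>A Bs. A \<subseteq> V \<longrightarrow> Bs \<subseteq> V \<longrightarrow> A \<inter> Bs = {} \<longrightarrow> t \<le> card A \<longrightarrow> t \<le> card Bs \<longrightarrow>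
      (\<exists>u\<in>A. \<exists>w\<in>Bs. {u,w} \<in> E)"
    and n: "card V = 5 * t"
  shows "int t < 2 * (treewidth V E + 1)"
proof -
  define W where "W = {decomp_width VT B | VT ET B. tree_decomposition V E VT ET B}"
  have ne: "W \<noteq> {}" using triv_td[OF g] unfolding W_def by blast
  have finV: "finite V" using g unfolding graph_def by simp
  have "W \<subseteq> {-1 .. int (card V)}"
  proof
    fix k assume "k \<in> W"
    then obtain VT ET B where td: "tree_decomposition V E VT ET B" and k: "k = decomp_width VT B"
      unfolding W_def by blast
    interpret tdec V E VT ET B using g td by unfold_locales
    have "\<forall>x\<in>VT. card (B x) \<le> card V" using bagsub finV by (simp add: card_mono)
    then have "Max ((\<lambda>x. card (B x)) ` VT) \<le> card V"
      using finVT VTne by (simp add: Max_le_iff)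
    then show "k \<in> {-1 .. int (card V)}" unfolding k decomp_width_def by auto
  qed
  then have fin: "finite W" by (rule finite_subset) simp
  have "Min W \<in> W" using fin ne by (rule Min_in)
  then obtain VT ET B where td: "tree_decomposition V E VT ET B" and tw: "treewidth V E = decomp_width VT B"
    unfolding W_def treewidth_def by auto
  interpret tdec V E VT ET B using g td by unfold_locales
  obtain x where x: "x \<in> VT" "t < 2 * card (B x)" using big_bag[OF exp n] by blast
  have "card (B x) \<le> Max ((\<lambda>x. card (B x)) ` VT)" using finVT x(1) by (auto intro: Max_ge)
  then have "int (card (B x)) \<le> treewidth V E + 1" unfolding tw decomp_width_def by simp
  moreover have "int t < int (2 * card (B x))" using x(2) by (simp only: of_nat_less_iff)
  ultimately show ?thesis by simp
qed

definition ball :: "nat set set \<Rightarrow> nat set \<Rightarrow> nat \<Rightarrow> nat \<Rightarrow> nat set" where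
  "ball E V v k = {u. \<exists>j\<le>k. (v,u) \<in> (Rel E V)^^j}"

lemma relpow_mono_sub: "(R :: ('a \<times> 'a) set) \<subseteq> R' \<Longrightarrow> R^^j \<subseteq> R'^^j"
  by (induction j) (simp_all add: relcomp_mono)

lemma ball_sub: "ball E V v k \<subseteq> insert v V"
proof
  fix u assume "u \<in> ball E V v k"
  then obtain j where "(v,u) \<in> (Rel E V)^^j" unfolding ball_def by blast
  then have "(v,u) \<in> (Rel E V)\<^sup>*" by (rule relpow_imp_rtrancl)
  then show "u \<in> insert v V"
  proof (cases rule: rtranclE)
    case base then show ?thesis by simp
  next
    case (step w) then show ?thesis unfolding Rel_def by auto
  qed
qed

lemma ball_Suc: "ball E V v (Suc k) \<subseteq> (\<Union>u\<in>ball E V v k. insert u {w. {u,w} \<in> E})"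
proof
  fix u' assume "u' \<in> ball E V v (Suc k)"
  then obtain j where j: "j \<le> Suc k" "(v,u') \<in> (Rel E V)^^j" unfolding ball_def by blast
  show "u' \<in> (\<Union>u\<in>ball E V v k. insert u {w. {u,w} \<in> E})"
  proof (cases "j \<le> k")
    case True
    then have "u' \<in> ball E V v k" using j unfolding ball_def by blast
    then show ?thesis by blast
  next
    case False
    then have "j = Suc k" using j by simp
    then obtain u where "(v,u) \<in> (Rel E V)^^k" "(u,u') \<in> Rel E V" using j(2) by (auto elim: relpow_Suc_E)
    then have "u \<in> ball E V v k" "{u,u'} \<in> E" unfolding ball_def Rel_def by auto
    then show ?thesis by blast
  qed
qed

lemma ball_card:
  assumes g: "graph V E" and deg: "\<forall>u. card {w. {u,w} \<in> E} \<le> Dg"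
  shows "card (ball E V v k) \<le> (Dg+1)^k"
proof (induction k)
  case 0
  have "ball E V v 0 = {v}" unfolding ball_def by auto
  then show ?case by simp
next
  case (Suc k)
  have finV: "finite V" using g unfolding graph_def by simp
  have fb: "finite (ball E V v m)" for m using ball_sub finV by (meson finite_insert finite_subset)
  have fN: "finite {w. {u,w} \<in> E}" for u
  proof -
    have "{w. {u,w} \<in> E} \<subseteq> V" using graph_edge[OF g] by blast
    then show ?thesis using finV finite_subset by blast
  qed
  have "card (ball E V v (Suc k)) \<le> card (\<Union>u\<in>ball E V v k. insert u {w. {u,w} \<in> E})"
    by (rule card_mono[OF _ ball_Suc]) (use fb fN in blast)
  also have "\<dots> \<le> (\<Sum>u\<in>ball E V v k. card (insert u {w. {u,w} \<in> E}))"
    by (rule card_UN_le[OF fb])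
  also have "\<dots> \<le> (\<Sum>u\<in>ball E V v k. Dg + 1)"
  proof (rule sum_mono)
    fix u
    have "card (insert u {w. {u,w} \<in> E}) \<le> card {w. {u,w} \<in> E} + 1"
      using fN[of u] by (simp add: card_insert_if)
    then show "card (insert u {w. {u,w} \<in> E}) \<le> Dg + 1" using deg by (meson add_le_mono1 le_trans)
  qed
  also have "\<dots> = card (ball E V v k) * (Dg + 1)" by simp
  also have "\<dots> \<le> (Dg+1)^k * (Dg+1)" using Suc.IH by (rule mult_right_mono) simp
  also have "\<dots> = (Dg+1)^(Suc k)" by (simp only: power_Suc mult.commute)
  finally show ?case .
qed

lemma growth_bound:
  assumes g: "graph V E" and deg: "\<forall>u. card {w. {u,w} \<in> E} \<le> Dg"
  shows "growth V E r \<le> card V \<and> growth V E r \<le> (Dg+1)^r"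
proof -
  define Sg where "Sg = {card W | W F. subgraph W F V E \<and> radius_le W F r}"
  have finV: "finite V" using g unfolding graph_def by simp
  have bnd: "k \<le> card V \<and> k \<le> (Dg+1)^r" if kS: "k \<in> Sg" for k
  proof -
    obtain W F where k: "k = card W" and sg: "subgraph W F V E" and rad: "radius_le W F r"
      using kS unfolding Sg_def by blast
    have WV: "W \<subseteq> V" "F \<subseteq> E" using sg unfolding subgraph_def by auto
    obtain v where v: "v \<in> W" "\<forall>u\<in>W. dist_le W F v u r" using rad unfolding radius_le_def by blast
    have "W \<subseteq> ball E V v r"
    proof
      fix u assume u: "u \<in> W"
      then obtain xs where xs: "walk F xs" "set xs \<subseteq> W" "hd xs = v" "last xs = u" "length xs \<le> Suc r"
        using v(2) unfolding dist_le_def by blast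
      have "(v,u) \<in> (Rel F W)^^(length xs - 1)" using walk_relpow[OF xs(1,2)] xs(3,4) by simp
      moreover have "Rel F W \<subseteq> Rel E V" using WV by (rule Rel_mono[rotated]) 
      ultimately have "(v,u) \<in> (Rel E V)^^(length xs - 1)" using relpow_mono_sub by blast
      moreover have "length xs - 1 \<le> r" using xs(5) by simp
      ultimately show "u \<in> ball E V v r" unfolding ball_def by blast
    qed
    moreover have "finite (ball E V v r)" using ball_sub finV by (meson finite_insert finite_subset)
    ultimately have "card W \<le> (Dg+1)^r" using ball_card[OF g deg, of v r] card_mono le_trans by blast
    moreover have "card W \<le> card V" using WV finV by (simp add: card_mono)
    ultimately show ?thesis using k by simp
  qed
  have "Sg \<subseteq> {..card V}" using bnd by auto
  then have fin: "finite (insert 0 Sg)" using finite_subset by auto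
  have "growth V E r = Max (insert 0 Sg)" unfolding growth_def Sg_def by simp
  then show ?thesis using bnd fin by (simp add: Max_le_iff)
qed

lemma good_graph:
  assumes t: "t \<ge> 1"
  shows "\<exists>V E. graph V E \<and> card V = 5*t \<and> (\<forall>u. card {w. {u,w} \<in> E} \<le> 64) \<and>
    (\<forall>A Bs. A \<subseteq> V \<longrightarrow> Bs \<subseteq> V \<longrightarrow> A \<inter> Bs = {} \<longrightarrow> t \<le> card A \<longrightarrow> t \<le> card Bs \<longrightarrow>
      (\<exists>u\<in>A. \<exists>w\<in>Bs. {u,w} \<in> E))"
proof -
  obtain P where perm: "\<forall>i<32::nat. P i permutes {0..<5*t}"
    and ex: "\<forall>A B. A \<subseteq> {0..<5*t} \<longrightarrow> B \<subseteq> {0..<5*t} \<longrightarrow> card A = t \<longrightarrow> card B = t \<longrightarrow>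
       (\<exists>i<32::nat. P i ` A \<inter> B \<noteq> {})"
    using expander_exists[OF t] by (elim exE conjE) (rule that)
  define V where "V = {0..<5*t}"
  define E where "E = {e. \<exists>v i. i < (32::nat) \<and> v \<in> V \<and> P i v \<noteq> v \<and> e = {v, P i v}}"
  have pV: "P i v \<in> V" if "i < 32" "v \<in> V" for i v
  proof -
    have pp: "P i permutes {0..<5*t}" using perm that(1) by simp
    show ?thesis using permutes_in_image[OF pp] that(2) unfolding V_def by simp
  qed
  have g: "graph V E" unfolding graph_def
  proof (intro conjI ballI)
    show "finite V" unfolding V_def by simp
    fix e assume "e \<in> E"
    then obtain v i where vi: "i < 32" "v \<in> V" "P i v \<noteq> v" "e = {v, P i v}" unfolding E_def by blast
    show "\<exists>u w. e = {u, w} \<and> u \<in> V \<and> w \<in> V \<and> u \<noteq> w"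
      by (intro exI[of _ v] exI[of _ "P i v"]) (use vi pV[OF vi(1,2)] in auto)
  qed
  have deg: "card {w. {u,w} \<in> E} \<le> 64" for u
  proof -
    have "{w. {u,w} \<in> E} \<subseteq> (\<lambda>i. P i u) ` {..<32} \<union> (\<lambda>i. inv (P i) u) ` {..<32}"
    proof
      fix w assume "w \<in> {w. {u,w} \<in> E}"
      then have "{u,w} \<in> E" by simp
      then obtain v i where vi: "i < 32" "v \<in> V" "{u,w} = {v, P i v}" unfolding E_def by blast
      then have "(u = v \<and> w = P i v) \<or> (u = P i v \<and> w = v)" by (simp add: doubleton_eq_iff)
      then show "w \<in> (\<lambda>i. P i u) ` {..<32} \<union> (\<lambda>i. inv (P i) u) ` {..<32}"
      proof
        assume "u = v \<and> w = P i v" then show ?thesis using vi(1) by auto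
      next
        assume a: "u = P i v \<and> w = v"
        have pp: "P i permutes {0..<5*t}" using perm vi(1) by simp
        have "inv (P i) u = v" using a permutes_inverses(2)[OF pp] by simp
        then have "w = (\<lambda>j. inv (P j) u) i" using a by simp
        moreover have "i \<in> {..<32}" using vi(1) by simp
        ultimately show ?thesis by blast
      qed
    qed
    then have "card {w. {u,w} \<in> E} \<le> card ((\<lambda>i. P i u) ` {..<32} \<union> (\<lambda>i. inv (P i) u) ` {..<32})"
      by (rule card_mono[rotated]) simp
    also have "\<dots> \<le> card ((\<lambda>i. P i u) ` {..<(32::nat)}) + card ((\<lambda>i. inv (P i) u) ` {..<(32::nat)})"
      by (rule card_Un_le)
    also have "\<dots> \<le> 32 + 32"
    proof -
      have c1: "card ((\<lambda>i. P i u) ` {..<(32::nat)}) \<le> 32"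
        using card_image_le[of "{..<(32::nat)}" "\<lambda>i. P i u"] by simp
      have c2: "card ((\<lambda>i. inv (P i) u) ` {..<(32::nat)}) \<le> 32"
        using card_image_le[of "{..<(32::nat)}" "\<lambda>i. inv (P i) u"] by simp
      show ?thesis using c1 c2 by (rule add_mono)
    qed
    finally show ?thesis by simp
  qed
  have expd: "\<exists>u\<in>A. \<exists>w\<in>Bs. {u,w} \<in> E"
    if AB: "A \<subseteq> V" "Bs \<subseteq> V" "A \<inter> Bs = {}" "t \<le> card A" "t \<le> card Bs" for A Bs
  proof -
    obtain A' where A': "A' \<subseteq> A" "card A' = t" using obtain_subset_with_card_n[OF AB(4)] by metis
    obtain B' where B': "B' \<subseteq> Bs" "card B' = t" using obtain_subset_with_card_n[OF AB(5)] by metis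
    have A'V: "A' \<subseteq> {0..<5*t}" using A'(1) AB(1) unfolding V_def by blast
    have B'V: "B' \<subseteq> {0..<5*t}" using B'(1) AB(2) unfolding V_def by blast
    obtain i where i: "i < 32" "P i ` A' \<inter> B' \<noteq> {}"
      using ex[rule_format, OF A'V B'V A'(2) B'(2)] by blast
    then obtain a where a: "a \<in> A'" "P i a \<in> B'" by blast
    have aA: "a \<in> A" "P i a \<in> Bs" using a A' B' by auto
    have ne: "a \<noteq> P i a" using aA AB(3) by auto
    have aV: "a \<in> V" using aA AB(1) by auto
    have "{a, P i a} \<in> E" unfolding E_def
      by (rule CollectI, intro exI[of _ a] exI[of _ i]) (use i(1) aV ne in simp)
    then show ?thesis using aA by blast
  qed
  have cV: "card V = 5*t" unfolding V_def by simp
  show ?thesis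
    by (intro exI[of _ V] exI[of _ E] conjI allI impI g cV deg expd) assumption+
qed

lemma arith_aux:
  fixes P N T W :: real
  assumes "P \<le> N" "N < 5*T + 5" "T < 2*(W+1)"
  shows "(P - 15)/10 \<le> W"
proof -
  have "P - 15 \<le> 10 * W" using assms by (simp add: algebra_simps)
  then show ?thesis by simp
qed

lemma key:
  fixes g :: "real \<Rightarrow> real" and c :: real
  assumes hyp: "\<forall>c::real. c \<ge> 1 \<longrightarrow> (\<forall>V E. graph V E \<longrightarrow>
             (\<forall>r::nat. r \<ge> 1 \<longrightarrow> real (growth V E r) \<le> c * real r) \<longrightarrow>
             real_of_int (treewidth V E) \<le> g c)"
    and c: "c \<ge> 65"
  shows "((c - 1) * (ln c / ln 65 - 1) - 15) / 10 \<le> g c"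
proof -
  define L where "L = ln (65::real)"
  have L: "L > 0" unfolding L_def by simp
  have c0: "c > 0" using c by simp
  have lc: "ln c \<ge> L" unfolding L_def using c by simp
  define x where "x = ln c / L"
  have x1: "x \<ge> 1" unfolding x_def using lc L by (simp add: le_divide_eq)
  define m where "m = nat \<lfloor>x\<rfloor>"
  have mx: "real m \<le> x" "x - 1 < real m" unfolding m_def using x1 by linarith+
  have m1: "m \<ge> 1" unfolding m_def using x1 by linarith
  have pm: "(65::real)^m \<le> c"
  proof -
    have "ln ((65::real)^m) = real m * L" unfolding L_def by (simp add: ln_realpow)
    also have "\<dots> \<le> x * L" using mx(1) L by (simp add: mult_right_mono)
    also have "\<dots> = ln c" unfolding x_def using L by simp
    finally show ?thesis using c0 by (simp add: ln_le_cancel_iff[symmetric] del: ln_le_cancel_iff)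
  qed
  define fc where "fc = nat \<lfloor>c\<rfloor>"
  have fc: "real fc \<le> c" "c - 1 < real fc" "fc \<ge> 65" unfolding fc_def using c by linarith+
  define N0 where "N0 = fc * m"
  define t where "t = N0 div 5"
  have N0: "N0 \<ge> 65" unfolding N0_def using fc(3) m1 by (metis le_trans mult_le_mono2 nat_mult_1_right)
  have t1: "t \<ge> 1" unfolding t_def using N0 by simp
  have tN: "5 * t \<le> N0" "N0 < 5 * t + 5" unfolding t_def by auto
  obtain V E where g: "graph V E" and cV: "card V = 5*t" and deg: "\<forall>u. card {w. {u,w} \<in> E} \<le> 64"
    and exp: "\<forall>A Bs. A \<subseteq> V \<longrightarrow> Bs \<subseteq> V \<longrightarrow> A \<inter> Bs = {} \<longrightarrow> t \<le> card A \<longrightarrow> t \<le> card Bs \<longrightarrow>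
      (\<exists>u\<in>A. \<exists>w\<in>Bs. {u,w} \<in> E)"
    using good_graph[OF t1] by (elim exE conjE) (rule that)
  have gr: "real (growth V E r) \<le> c * real r" if r: "r \<ge> 1" for r
  proof -
    have gb: "growth V E r \<le> 5 * t" "growth V E r \<le> 65^r" using growth_bound[OF g deg, of r] cV by auto
    show ?thesis
    proof (cases "m \<le> r")
      case True
      have "real (growth V E r) \<le> real N0" using gb(1) tN(1) by linarith
      also have "\<dots> = real fc * real m" unfolding N0_def by simp
      also have "\<dots> \<le> c * real m" using fc(1) by (simp add: mult_right_mono)
      also have "\<dots> \<le> c * real r" using True c0 by simp
      finally show ?thesis .
    next
      case False
      have "real (growth V E r) \<le> 65^r" using gb(2) by (metis of_nat_le_iff of_nat_numeral of_nat_power)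
      also have "(65::real)^r \<le> 65^m" using False by (intro power_increasing) auto
      also have "\<dots> \<le> c" by (rule pm)
      also have "\<dots> \<le> c * real r" using r c0 by simp
      finally show ?thesis .
    qed
  qed
  have tw: "real_of_int (treewidth V E) \<le> g c" using hyp c g gr by auto
  have "int t < 2 * (treewidth V E + 1)" using tw_lower[OF g exp cV] .
  then have "real_of_int (int t) < real_of_int (2 * (treewidth V E + 1))" by (simp only: of_int_less_iff)
  then have tw2: "real t < 2 * (real_of_int (treewidth V E) + 1)" by simp
  have "real N0 = real fc * real m" unfolding N0_def by simp
  moreover have "(c - 1) * (x - 1) \<le> real fc * real m"
    using fc mx x1 c by (intro mult_mono) auto
  ultimately have "(c - 1) * (x - 1) \<le> real N0" by simp
  moreover have "real N0 < 5 * real t + 5" using tN(2) by linarith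
  ultimately have "((c - 1) * (x - 1) - 15) / 10 \<le> real_of_int (treewidth V E)" using tw2
    by (metis (no_types) arith_aux)
  then show ?thesis using tw unfolding x_def L_def by simp
qed

theorem theorem8:
  fixes g :: "real \<Rightarrow> real"
  assumes "\<forall>c::real. c \<ge> 1 \<longrightarrow> (\<forall>V E. graph V E \<longrightarrow>
             (\<forall>r::nat. r \<ge> 1 \<longrightarrow> real (growth V E r) \<le> c * real r) \<longrightarrow>
             real_of_int (treewidth V E) \<le> g c)"
  shows "g \<in> \<Omega>(\<lambda>c. c * ln c)"
proof -
  define h where "h c = ((c - 1) * (ln c / ln 65 - 1) - 15) / 10" for c :: real
  have ev1: "eventually (\<lambda>c. h c \<le> g c) at_top"
    using eventually_ge_at_top[of "65::real"] by eventually_elim (use key[OF assms] in \<open>simp add: h_def\<close>)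
  have ev2: "eventually (\<lambda>c. 0 \<le> h c) at_top" unfolding h_def by real_asymp
  have "h \<in> O(g)"
  proof (rule landau_o.big_mono)
    show "eventually (\<lambda>c. norm (h c) \<le> norm (g c)) at_top"
      using ev1 ev2 by eventually_elim auto
  qed
  moreover have "(\<lambda>c. c * ln c) \<in> O(h)" unfolding h_def by real_asymp
  ultimately have "(\<lambda>c. c * ln c) \<in> O(g)" using landau_o.big_trans by blast
  then show ?thesis by (simp add: bigomega_iff_bigo)
qed

end
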